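(* If $f\in\mathcal F$ and $g\in\mathcal M_f$, then $fg\in\mathcal F$.
   Context: $\Lambda=[-\pi,\pi]$. For $h\ge0$, the geometric mean is $G(h)=\exp\{\frac1{2\pi}\int_\Lambda\ln h(\lambda)d\lambda\}$ if $\ln h\in L^1(\Lambda)$ and $G(h)=0$ otherwise. For a spectral density $f$ ($f\ge0$, $f\in L^1(\Lambda)$, positive on a set of positive measure), $\sigma_n^2(f)=\min_{c_1,\dots,c_n\in\mathbb C}\int_\Lambda|1-\sum_{k=1}^n c_ke^{-ik\lambda}|^2f(\lambda)\,d\lambda$ and $\sigma_n(f)=\sqrt{\sigma_n^2(f)}$. $\mathcal F=\{f\in L^1(\Lambda): f\ge0,\ G(f)=0,\ \lim_{n\to\infty}\sigma_{n+1}(f)/\sigma_n(f)=1\}$ (spectral densities of deterministic processes with weakly varying prediction error). For $f\in\mathcal F$, $\mathcal M_f$ is the class of functions $g\ge0$ on $\Lambda$ with $G(g)>0$, $fg\in L^1(\Lambda)$ and $\lim_{n\to\infty}\sigma_n^2(fg)/\sigma_n^2(f)=G(g)$. *)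

theory Defs
  imports "HOL-Analysis.Analysis"
begin

definition Lam :: "real set" where
  "Lam = {-pi..pi}"

text \<open>Geometric mean. ln h in L1 requires h > 0 almost everywhere on Lambda
  (otherwise ln h = -infinity on a set of positive measure).\<close>
definition geom_mean :: "(real \<Rightarrow> real) \<Rightarrow> real" where
  "geom_mean h =
    (if (AE x in lebesgue. x \<in> Lam \<longrightarrow> h x > 0) \<and>
        set_integrable lebesgue Lam (\<lambda>x. ln (h x))
     then exp (1 / (2 * pi) * (LINT x:Lam|lebesgue. ln (h x)))
     else 0)"

text \<open>sigma_n^2(f): minimal one-step prediction error from n past values.\<close>
definition sigma_sq :: "(real \<Rightarrow> real) \<Rightarrow> nat \<Rightarrow> real" where
  "sigma_sq f n =
    (INF c \<in> (UNIV :: (nat \<Rightarrow> complex) set).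
       LINT x:Lam|lebesgue.
         (cmod (1 - (\<Sum>k=1..n. c k * cis (- (real k * x))))) ^ 2 * f x)"

definition sigma :: "(real \<Rightarrow> real) \<Rightarrow> nat \<Rightarrow> real" where
  "sigma f n = sqrt (sigma_sq f n)"

definition classF :: "(real \<Rightarrow> real) set" where
  "classF = {f. set_integrable lebesgue Lam f \<and> (\<forall>x\<in>Lam. f x \<ge> 0) \<and>
               geom_mean f = 0 \<and>
               (\<lambda>n. sigma f (Suc n) / sigma f n) \<longlonglongrightarrow> 1}"

definition classM :: "(real \<Rightarrow> real) \<Rightarrow> (real \<Rightarrow> real) set" where
  "classM f = {g. (\<forall>x\<in>Lam. g x \<ge> 0) \<and> geom_mean g > 0 \<and>
                  set_integrable lebesgue Lam (\<lambda>x. f x * g x) \<and>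
                  (\<lambda>n. sigma_sq (\<lambda>x. f x * g x) n / sigma_sq f n)
                     \<longlonglongrightarrow> geom_mean g}"

end

theory Submission
  imports Defs
begin

lemma sqrt_abs_self: "sqrt x * \<bar>sqrt x\<bar> = (x::real)"
proof (cases "x \<ge> 0")
  case False
  have "sqrt x = - sqrt (-x)" using real_sqrt_minus[of "-x"] by simp
  moreover have "sqrt (-x) * sqrt (-x) = -x" using False by simp
  ultimately show ?thesis by simp
qed simp

lemma gm_zero:
  fixes f g :: "real \<Rightarrow> real"
  assumes f0: "\<forall>x\<in>Lam. f x \<ge> 0" and gf: "geom_mean f = 0" and gg: "geom_mean g > 0"
  shows "geom_mean (\<lambda>x. f x * g x) = 0"
proof (rule ccontr)
  assume "geom_mean (\<lambda>x. f x * g x) \<noteq> 0"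
  hence A1: "AE x in lebesgue. x \<in> Lam \<longrightarrow> f x * g x > 0"
    and I1: "set_integrable lebesgue Lam (\<lambda>x. ln (f x * g x))"
    unfolding geom_mean_def by (auto split: if_splits)
  from gg have A2: "AE x in lebesgue. x \<in> Lam \<longrightarrow> g x > 0"
    and I2: "set_integrable lebesgue Lam (\<lambda>x. ln (g x))"
    unfolding geom_mean_def by (auto split: if_splits)
  have A3: "AE x in lebesgue. x \<in> Lam \<longrightarrow> f x > 0"
    using A1 A2 f0 by eventually_elim (auto simp: zero_less_mult_iff)
  have AE: "AE x in lebesgue. indicator Lam x *\<^sub>R ln (f x * g x) - indicator Lam x *\<^sub>R ln (g x)
       = indicator Lam x *\<^sub>R ln (f x)"
    using A2 A3 by eventually_elim (auto simp: indicator_def ln_mult)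
  have int: "integrable lebesgue (\<lambda>x. indicator Lam x *\<^sub>R ln (f x * g x) - indicator Lam x *\<^sub>R ln (g x))"
    using I1 I2 unfolding set_integrable_def by (rule Bochner_Integration.integrable_diff)
  have meas: "(\<lambda>x. indicator Lam x *\<^sub>R ln (f x)) \<in> borel_measurable lebesgue"
    by (rule borel_measurable_AE[OF borel_measurable_integrable[OF int] AE])
  have "set_integrable lebesgue Lam (\<lambda>x. ln (f x))"
    unfolding set_integrable_def by (rule integrable_cong_AE_imp[OF int meas AE])
  with A3 have "geom_mean f > 0" unfolding geom_mean_def by auto
  with gf show False by simp
qed

theorem mainTheorem8:
  fixes f g :: "real \<Rightarrow> real"
  assumes "f \<in> classF" and "g \<in> classM f"
  shows "(\<lambda>x. f x * g x) \<in> classF"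
proof -
  from assms have f0: "\<forall>x\<in>Lam. f x \<ge> 0" and gf: "geom_mean f = 0"
    and rf: "(\<lambda>n. sigma f (Suc n) / sigma f n) \<longlonglongrightarrow> 1"
    and g0: "\<forall>x\<in>Lam. g x \<ge> 0" and gg: "geom_mean g > 0"
    and I: "set_integrable lebesgue Lam (\<lambda>x. f x * g x)"
    and lim: "(\<lambda>n. sigma_sq (\<lambda>x. f x * g x) n / sigma_sq f n) \<longlonglongrightarrow> geom_mean g"
    unfolding classF_def classM_def by auto
  define A where "A n = sigma_sq (\<lambda>x. f x * g x) n / sigma_sq f n" for n
  define r where "r n = sigma_sq f (Suc n) / sigma_sq f n" for n
  have rs: "sigma f (Suc n) / sigma f n = sqrt (r n)" for n
    unfolding r_def sigma_def by (simp add: real_sqrt_divide)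
  have r1: "r \<longlonglongrightarrow> 1"
  proof -
    have s: "(\<lambda>n. sqrt (r n)) \<longlonglongrightarrow> 1" using rf rs by simp
    have "(\<lambda>n. sqrt (r n) * \<bar>sqrt (r n)\<bar>) \<longlonglongrightarrow> 1 * \<bar>1\<bar>"
      by (intro tendsto_intros s)
    thus ?thesis by (simp add: sqrt_abs_self)
  qed
  have Alim: "A \<longlonglongrightarrow> geom_mean g" using lim unfolding A_def by simp
  have ev: "eventually (\<lambda>n. A n \<noteq> 0) sequentially"
    using Alim gg by (simp add: tendsto_imp_eventually_ne)
  hence ev2: "eventually (\<lambda>n. A n \<noteq> 0 \<and> A (Suc n) \<noteq> 0) sequentially"
    by (simp add: eventually_sequentially) (metis le_Suc_eq)
  have Alim2: "(\<lambda>n. A (Suc n) / A n * r n) \<longlonglongrightarrow> geom_mean g / geom_mean g * 1"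
    using gg by (intro tendsto_intros Alim r1 LIMSEQ_Suc) auto
  have eq: "eventually (\<lambda>n. A (Suc n) / A n * r n =
        sigma_sq (\<lambda>x. f x * g x) (Suc n) / sigma_sq (\<lambda>x. f x * g x) n) sequentially"
    using ev2 by eventually_elim (auto simp: A_def r_def field_simps)
  have "(\<lambda>n. sigma_sq (\<lambda>x. f x * g x) (Suc n) / sigma_sq (\<lambda>x. f x * g x) n) \<longlonglongrightarrow> 1"
    using Lim_transform_eventually[OF Alim2 eq] gg by simp
  hence "(\<lambda>n. sqrt (sigma_sq (\<lambda>x. f x * g x) (Suc n) / sigma_sq (\<lambda>x. f x * g x) n)) \<longlonglongrightarrow> sqrt 1"
    by (intro tendsto_intros)
  hence R: "(\<lambda>n. sigma (\<lambda>x. f x * g x) (Suc n) / sigma (\<lambda>x. f x * g x) n) \<longlonglongrightarrow> 1"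
    by (simp add: sigma_def real_sqrt_divide)
  show ?thesis unfolding classF_def
    using I f0 g0 R gm_zero[OF f0 gf gg] by auto
qed

end
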